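(* Let $\omega_1$ and $\omega_2$ be symplectic forms on $\mathbb{R}^{2n}$ with matrix representations $\Omega_1$ and $\Omega_2$. Then $\omega_1$ and $\omega_2$ are $\omega_{\mathrm{std}}$-symplectomorphic only if there exists $\varphi \in \operatorname{Symp}(\mathbb{R}^{2n},\omega_{\mathrm{std}})$ such that for every $x \in \mathbb{R}^{2n}$, $\operatorname{Pf}(\Omega_1(\varphi(x))) = \operatorname{Pf}(\Omega_2(x))$ and $\operatorname{s}(\Omega_1(\varphi(x))) = \operatorname{s}(\Omega_2(x))$.
   Context: A 2-form on $\mathbb{R}^{2n}$ (coordinates $x_1,\dots,x_{2n}$) is $\omega = \sum_{i<j}\omega_{i,j}\,dx_i\wedge dx_j$ with functions $\omega_{i,j}:\mathbb{R}^{2n}\to\mathbb{R}$; its matrix representation $\Omega(x)$ is the skew-symmetric matrix with $\Omega(x)_{i,j} = \omega_{i,j}(x)$ for $i<j$. A symplectic form is a smooth, closed 2-form with $\det\Omega(x)\neq 0$ for all $x$. The standard symplectic form is $\omega_{\mathrm{std}} = \sum_{i=1}^n dx_{2i-1}\wedge dx_{2i}$. The pullback is $(\varphi^*\omega)(x)(v,w) = \omega(\varphi(x))(d\varphi_x v, d\varphi_x w)$. $\operatorname{Symp}(\mathbb{R}^{2n},\omega_{\mathrm{std}})$ is the set of diffeomorphisms $\varphi$ of $\mathbb{R}^{2n}$ with $\varphi^*\omega_{\mathrm{std}} = \omega_{\mathrm{std}}$. Symplectic forms $\omega_1,\omega_2$ are $\omega_{\mathrm{std}}$-symplectomorphic if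 there is $\varphi \in \operatorname{Symp}(\mathbb{R}^{2n},\omega_{\mathrm{std}})$ with $\varphi^*\omega_1 = \omega_2$. For a skew-symmetric $2n\times 2n$ matrix $A$, $\operatorname{Pf}(A) = \frac{1}{2^n n!}\sum_{\sigma\in S_{2n}}\operatorname{sgn}(\sigma)\prod_{i=1}^n A_{\sigma(2i-1),\sigma(2i)}$ (so that $\operatorname{Pf}(A)^2=\det A$), and the sum function is $\operatorname{s}(A) = \sum_{i=1}^n A_{2i-1,2i}$. *)

theory Defs
  imports "HOL-Analysis.Analysis"
begin

text \<open>Model of R^{2n}: coordinates are indexed by the finite type ('k \<times> bool), where
  n = CARD('k); the coordinate x_{2i-1} corresponds to index (k_i, False) and x_{2i}
  to (k_i, True) for an enumeration k_1,...,k_n of 'k.  Pairs (x_{2i-1}, x_{2i}) are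
  thus intrinsic, which is all that the standard form, the Pfaffian and the sum
  function depend on.\<close>

type_synonym 'k pt = "real ^ ('k \<times> bool)"
type_synonym 'k mat = "real ^ ('k \<times> bool) ^ ('k \<times> bool)"

coinductive smooth :: "('a::euclidean_space \<Rightarrow> 'b::real_normed_vector) \<Rightarrow> bool" where
  "f differentiable_on UNIV \<Longrightarrow>
   (\<forall>i\<in>Basis. smooth (\<lambda>x. frechet_derivative f (at x) i)) \<Longrightarrow> smooth f"

definition partial :: "('k::finite pt \<Rightarrow> real) \<Rightarrow> ('k \<times> bool) \<Rightarrow> 'k pt \<Rightarrow> real" where
  "partial f i x = frechet_derivative f (at x) (axis i 1)"

definition form_app :: "('k::finite pt \<Rightarrow> 'k mat) \<Rightarrow> 'k pt \<Rightarrow> 'k pt \<Rightarrow> 'k pt \<Rightarrow> real" where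
  "form_app \<Omega> x v w = v \<bullet> (\<Omega> x *v w)"

definition skew_field :: "('k::finite pt \<Rightarrow> 'k mat) \<Rightarrow> bool" where
  "skew_field \<Omega> \<longleftrightarrow> (\<forall>x. transpose (\<Omega> x) = - \<Omega> x)"

definition closed_form :: "('k::finite pt \<Rightarrow> 'k mat) \<Rightarrow> bool" where
  "closed_form \<Omega> \<longleftrightarrow> (\<forall>x i j k.
      partial (\<lambda>y. \<Omega> y $ j $ k) i x + partial (\<lambda>y. \<Omega> y $ k $ i) j x
      + partial (\<lambda>y. \<Omega> y $ i $ j) k x = 0)"

definition symplectic_form :: "('k::finite pt \<Rightarrow> 'k mat) \<Rightarrow> bool" where
  "symplectic_form \<Omega> \<longleftrightarrow> skew_field \<Omega> \<and> smooth \<Omega> \<and> closed_form \<Omega>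
     \<and> (\<forall>x. det (\<Omega> x) \<noteq> 0)"

definition omega_std :: "'k::finite pt \<Rightarrow> 'k mat" where
  "omega_std x = (\<chi> a b. if fst a = fst b \<and> \<not> snd a \<and> snd b then 1
                         else if fst a = fst b \<and> snd a \<and> \<not> snd b then -1 else 0)"

definition pullback :: "('k::finite pt \<Rightarrow> 'k pt) \<Rightarrow> ('k pt \<Rightarrow> 'k pt \<Rightarrow> 'k pt \<Rightarrow> real)
    \<Rightarrow> 'k pt \<Rightarrow> 'k pt \<Rightarrow> 'k pt \<Rightarrow> real" where
  "pullback \<phi> B x v w = B (\<phi> x) (frechet_derivative \<phi> (at x) v) (frechet_derivative \<phi> (at x) w)"

definition diffeomorphism :: "('a::euclidean_space \<Rightarrow> 'a) \<Rightarrow> bool" where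
  "diffeomorphism \<phi> \<longleftrightarrow> bij \<phi> \<and> smooth \<phi> \<and> smooth (inv \<phi>)"

definition Symp_std :: "('k::finite pt \<Rightarrow> 'k pt) set" where
  "Symp_std = {\<phi>. diffeomorphism \<phi> \<and>
      pullback \<phi> (form_app omega_std) = form_app omega_std}"

definition std_symplectomorphic :: "('k::finite pt \<Rightarrow> 'k mat) \<Rightarrow> ('k pt \<Rightarrow> 'k mat) \<Rightarrow> bool" where
  "std_symplectomorphic \<Omega>1 \<Omega>2 \<longleftrightarrow>
     (\<exists>\<phi>\<in>Symp_std. pullback \<phi> (form_app \<Omega>1) = form_app \<Omega>2)"

definition pfaffian :: "'k::finite mat \<Rightarrow> real" where
  "pfaffian A = (1 / (2 ^ CARD('k) * fact CARD('k))) *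
     (\<Sum>\<sigma>\<in>{\<sigma>. \<sigma> permutes (UNIV :: ('k \<times> bool) set)}.
        of_int (sign \<sigma>) * (\<Prod>k\<in>UNIV. A $ \<sigma> (k, False) $ \<sigma> (k, True)))"

definition sumfun :: "'k::finite mat \<Rightarrow> real" where
  "sumfun A = (\<Sum>k\<in>UNIV. A $ (k, False) $ (k, True))"

end

theory Submission
  imports Defs
begin


definition P0 :: "'k::finite mat \<Rightarrow> real" where
  "P0 A = (\<Sum>\<sigma>\<in>{\<sigma>. \<sigma> permutes (UNIV :: ('k \<times> bool) set)}.
        of_int (sign \<sigma>) * (\<Prod>k\<in>UNIV. A $ \<sigma> (k, False) $ \<sigma> (k, True)))"

lemma pfaffian_P0: "pfaffian A = (1 / (2 ^ CARD('k) * fact CARD('k))) * P0 (A::'k::finite mat)"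
  by (simp add: pfaffian_def P0_def)

lemma congr_entry:
  fixes A B :: "'n::finite mat"
  shows "(transpose B ** A ** B) $ a $ b =
    (\<Sum>h\<in>(UNIV::(bool \<Rightarrow> ('n\<times>bool)) set). B$(h False)$a * A$(h False)$(h True) * B$(h True)$b)"
proof -
  have "(transpose B ** A ** B) $ a $ b = (\<Sum>d\<in>UNIV. (\<Sum>c\<in>UNIV. B$c$a * A$c$d) * B$d$b)"
    by (simp add: matrix_matrix_mult_def transpose_def)
  also have "\<dots> = (\<Sum>(c,d)\<in>UNIV \<times> UNIV. B$c$a * A$c$d * B$d$b)"
  proof -
    have "(\<Sum>d\<in>UNIV. (\<Sum>c\<in>UNIV. B$c$a * A$c$d) * B$d$b) = (\<Sum>d\<in>UNIV. \<Sum>c\<in>UNIV. B$c$a * A$c$d * B$d$b)"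
      by (simp add: sum_distrib_right)
    also have "\<dots> = (\<Sum>c\<in>UNIV. \<Sum>d\<in>UNIV. B$c$a * A$c$d * B$d$b)"
      by (rule sum.swap)
    also have "\<dots> = (\<Sum>(c,d)\<in>UNIV \<times> UNIV. B$c$a * A$c$d * B$d$b)"
      by (rule sum.cartesian_product)
    finally show ?thesis .
  qed
  also have "\<dots> = (\<Sum>h\<in>(UNIV::(bool \<Rightarrow> ('n\<times>bool)) set). B$(h False)$a * A$(h False)$(h True) * B$(h True)$b)"
    by (rule sum.reindex_bij_witness[where i="\<lambda>h. (h False, h True)" and j="\<lambda>(c,d) b. if b then d else c"])
       (force simp: fun_eq_iff)+
  finally show ?thesis .
qed

lemma prod_pairs:
  fixes G :: "('k::finite \<times> bool) \<Rightarrow> real"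
  shows "(\<Prod>a\<in>UNIV. G a) = (\<Prod>k\<in>UNIV. G (k,False) * G (k,True))"
proof -
  have "(\<Prod>k\<in>UNIV. \<Prod>b\<in>UNIV. G (k,b)) = (\<Prod>(k,b)\<in>UNIV \<times> UNIV. G (k,b))"
    by (rule prod.cartesian_product)
  then have "(\<Prod>a\<in>UNIV. G a) = (\<Prod>k\<in>UNIV. \<Prod>b\<in>UNIV. G (k,b))"
    by (simp add: UNIV_Times_UNIV case_prod_beta')
  also have "\<dots> = (\<Prod>k\<in>UNIV. G (k,False) * G (k,True))"
    by (simp add: UNIV_bool mult.commute)
  finally show ?thesis .
qed

lemma det_rows_fun:
  fixes B :: "'n::finite mat" and f :: "('n\<times>bool) \<Rightarrow> ('n\<times>bool)"
  shows "det (\<chi> a. B $ f a) = (if f permutes UNIV then of_int (sign f) * det B else 0)"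
proof (cases "f permutes UNIV")
  case True then show ?thesis by (simp add: det_permute_rows)
next
  case False
  have "\<not> inj f"
  proof
    assume "inj f"
    then have "surj f" by (rule finite_UNIV_inj_surj[OF finite])
    with \<open>inj f\<close> have "bij f" by (rule bijI)
    then have "f permutes UNIV" by (rule bij_imp_permutes) simp
    with False show False by simp
  qed
  then obtain i j where ij: "f i = f j" "i \<noteq> j" unfolding inj_def by blast
  have "det (\<chi> a. B $ f a) = 0"
    by (rule det_identical_rows[OF ij(2)]) (simp only: row_def vec_lambda_beta ij(1))
  with False show ?thesis by simp
qed


lemma P0_congr:
  fixes A B :: "'k::finite mat"
  shows "P0 (transpose B ** A ** B) = det B * P0 A"
proof -
  let ?PU = "{\<sigma>. \<sigma> permutes (UNIV :: ('k \<times> bool) set)}"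
  define \<alpha> where "\<alpha> f = (\<Prod>k\<in>UNIV. A $ f (k,False) $ f (k,True))" for f :: "'k \<times> bool \<Rightarrow> 'k \<times> bool"
  define \<beta> where "\<beta> \<sigma> f = (\<Prod>a\<in>UNIV. B $ f a $ \<sigma> a)" for f \<sigma> :: "'k \<times> bool \<Rightarrow> 'k \<times> bool"
  have step: "(\<Prod>k\<in>UNIV. (transpose B ** A ** B) $ \<sigma> (k, False) $ \<sigma> (k, True))
      = (\<Sum>f\<in>UNIV. \<alpha> f * \<beta> \<sigma> f)" for \<sigma>
  proof -
    let ?G = "\<lambda>k (h::bool \<Rightarrow> 'k \<times> bool). B$(h False)$\<sigma> (k, False) * A$(h False)$(h True) * B$(h True)$\<sigma> (k, True)"
    have "(\<Prod>k\<in>UNIV. (transpose B ** A ** B) $ \<sigma> (k, False) $ \<sigma> (k, True))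
        = (\<Prod>k\<in>UNIV. \<Sum>h\<in>UNIV. ?G k h)"
      by (simp only: congr_entry)
    also have "\<dots> = (\<Sum>g\<in>PiE UNIV (\<lambda>_. UNIV). \<Prod>k\<in>UNIV. ?G k (g k))"
      by (rule prod_sum_PiE) auto
    also have "\<dots> = (\<Sum>g\<in>UNIV. \<Prod>k\<in>UNIV. ?G k (g k))"
      by (simp add: PiE_UNIV_domain)
    also have "\<dots> = (\<Sum>f\<in>UNIV. \<Prod>k\<in>UNIV. ?G k (\<lambda>b. f (k,b)))"
      by (rule sum.reindex_bij_witness[where i="\<lambda>f k b. f (k,b)" and j="\<lambda>g (k,b). g k b"]) auto
    also have "\<dots> = (\<Sum>f\<in>UNIV. \<alpha> f * \<beta> \<sigma> f)"
    proof (rule sum.cong[OF refl])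
      fix f :: "'k \<times> bool \<Rightarrow> 'k \<times> bool"
      have "(\<Prod>k\<in>UNIV. ?G k (\<lambda>b. f (k,b))) = (\<Prod>k\<in>UNIV. A $ f (k,False) $ f (k,True) *
              (B $ f (k,False) $ \<sigma> (k,False) * B $ f (k,True) $ \<sigma> (k,True)))"
        by (rule prod.cong[OF refl]) (simp add: mult_ac)
      also have "\<dots> = \<alpha> f * (\<Prod>k\<in>UNIV. B $ f (k,False) $ \<sigma> (k,False) * B $ f (k,True) $ \<sigma> (k,True))"
        by (simp add: \<alpha>_def prod.distrib)
      also have "\<dots> = \<alpha> f * \<beta> \<sigma> f"
        by (simp add: \<beta>_def prod_pairs[where G="\<lambda>a. B $ f a $ \<sigma> a"])
      finally show "(\<Prod>k\<in>UNIV. ?G k (\<lambda>b. f (k,b))) = \<alpha> f * \<beta> \<sigma> f" .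
    qed
    finally show ?thesis .
  qed
  have "P0 (transpose B ** A ** B) = (\<Sum>\<sigma>\<in>?PU. of_int (sign \<sigma>) * (\<Sum>f\<in>UNIV. \<alpha> f * \<beta> \<sigma> f))"
    unfolding P0_def by (simp only: step)
  also have "\<dots> = (\<Sum>\<sigma>\<in>?PU. \<Sum>f\<in>UNIV. \<alpha> f * (of_int (sign \<sigma>) * \<beta> \<sigma> f))"
    by (simp add: sum_distrib_left mult_ac)
  also have "\<dots> = (\<Sum>f\<in>UNIV. \<Sum>\<sigma>\<in>?PU. \<alpha> f * (of_int (sign \<sigma>) * \<beta> \<sigma> f))"
    by (rule sum.swap)
  also have "\<dots> = (\<Sum>f\<in>UNIV. \<alpha> f * det (\<chi> a. B $ f a))"
    by (simp add: sum_distrib_left[symmetric] det_def \<beta>_def)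
  also have "\<dots> = (\<Sum>f\<in>UNIV. if f permutes UNIV then det B * (of_int (sign f) * \<alpha> f) else 0)"
    by (rule sum.cong[OF refl]) (simp add: det_rows_fun mult_ac)
  also have "\<dots> = (\<Sum>f\<in>?PU. det B * (of_int (sign f) * \<alpha> f))"
    by (simp add: sum.inter_filter[symmetric])
  also have "\<dots> = det B * P0 A"
    by (simp add: P0_def \<alpha>_def sum_distrib_left)
  finally show ?thesis .
qed



lemma S_entry: "omega_std x $ a $ b = (if b = (fst a, \<not> snd a) then (if snd a then -1 else 1) else (0::real))"
  by (cases a; cases b) (auto simp: omega_std_def)

definition prodperm :: "('k \<Rightarrow> 'k) \<Rightarrow> ('k \<times> bool \<Rightarrow> 'k \<times> bool)" where
  "prodperm \<pi> = (\<lambda>(k,b). (\<pi> k, b))"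

definition flip :: "'k set \<Rightarrow> ('k \<times> bool \<Rightarrow> 'k \<times> bool)" where
  "flip K = (\<lambda>(k,b). (k, if k \<in> K then \<not> b else b))"

lemma prodperm_sign:
  fixes \<pi> :: "'k::finite \<Rightarrow> 'k"
  assumes "\<pi> permutes UNIV"
  shows "permutation (prodperm \<pi>) \<and> sign (prodperm \<pi>) = 1"
  using assms finite
proof (induction rule: permutes_induct)
  case id
  have "prodperm (\<lambda>a::'k. a) = (id :: 'k \<times> bool \<Rightarrow> _)" by (auto simp: prodperm_def)
  then show ?case by (simp add: permutation_id sign_id)
next
  case (swap a b p)
  have eq: "prodperm (Transposition.transpose a b \<circ> p) =
      Transposition.transpose (a,False) (b,False) \<circ> Transposition.transpose (a,True) (b,True) \<circ> prodperm p"
    by (auto simp: prodperm_def fun_eq_iff Transposition.transpose_def)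
  have p1: "permutation (Transposition.transpose (a,False) (b,False) \<circ> Transposition.transpose (a,True) (b,True))"
    by (simp add: permutation_compose permutation_swap_id)
  have s1: "sign (Transposition.transpose (a,False) (b,False) \<circ> Transposition.transpose (a,True) (b,True)) = 1"
    using swap.hyps(3) by (simp add: sign_compose permutation_swap_id sign_swap_id)
  have pp: "permutation (prodperm p)" and sp: "sign (prodperm p) = 1" using swap.IH by auto
  have "sign (Transposition.transpose (a,False) (b,False) \<circ> Transposition.transpose (a,True) (b,True) \<circ> prodperm p) = 1"
    using sign_compose[OF p1 pp] s1 sp by simp
  then show ?case
    unfolding eq using permutation_compose[OF p1 pp] by blast
qed

lemma flip_sign:
  fixes K :: "'k set"
  assumes "finite K"
  shows "permutation (flip K) \<and> sign (flip K) = (-1) ^ card K"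
  using assms
proof (induction rule: finite_induct)
  case empty
  have "flip {} = (id :: 'k \<times> bool \<Rightarrow> _)" by (auto simp: flip_def)
  then show ?case by (simp add: permutation_id sign_id)
next
  case (insert k K)
  have eq: "flip (insert k K) = Transposition.transpose (k,False) (k,True) \<circ> flip K"
    using insert.hyps(2) by (auto simp: flip_def fun_eq_iff Transposition.transpose_def)
  have pp: "permutation (flip K)" and sp: "sign (flip K) = (-1) ^ card K" using insert.IH by auto
  have "sign (Transposition.transpose (k,False) (k,True) \<circ> flip K) = - ((-1) ^ card K)"
    using sign_compose[OF permutation_swap_id pp] sp by (simp add: sign_swap_id)
  also have "\<dots> = (-1) ^ card (insert k K)"
    using insert.hyps by simp
  finally show ?case
    unfolding eq using permutation_compose[OF permutation_swap_id pp] by blast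
qed

lemma std_term_nonneg:
  fixes \<sigma> :: "'k::finite \<times> bool \<Rightarrow> 'k \<times> bool"
  assumes \<sigma>: "\<sigma> permutes UNIV"
  shows "0 \<le> of_int (sign \<sigma>) * (\<Prod>k\<in>UNIV. omega_std x $ \<sigma> (k, False) $ \<sigma> (k, True))"
proof (cases "\<exists>k. omega_std x $ \<sigma> (k, False) $ \<sigma> (k, True) = 0")
  case True
  then obtain k where "omega_std x $ \<sigma> (k, False) $ \<sigma> (k, True) = 0" by blast
  then have "(\<Prod>k\<in>UNIV. omega_std x $ \<sigma> (k, False) $ \<sigma> (k, True)) = 0"
    by (intro prod_zero) auto
  then show ?thesis by (metis mult_zero_right order_refl)
next
  case False
  then have pair: "\<sigma> (k, True) = (fst (\<sigma> (k,False)), \<not> snd (\<sigma> (k,False)))" for k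
    by (metis S_entry)
  define K where "K = {k. snd (\<sigma> (k,False))}"
  define \<pi> where "\<pi> k = fst (\<sigma> (k,False))" for k
  have vals: "omega_std x $ \<sigma> (k, False) $ \<sigma> (k, True) = (if k \<in> K then -1 else 1)" for k
    using pair[of k] by (simp add: S_entry K_def)
  have prodval: "(\<Prod>k\<in>UNIV. omega_std x $ \<sigma> (k, False) $ \<sigma> (k, True)) = (-1) ^ card K"
    by (simp add: vals prod.If_cases)
  have comp: "\<sigma> \<circ> flip K = prodperm \<pi>"
  proof
    fix a :: "'k \<times> bool"
    obtain k b where a: "a = (k,b)" by (cases a)
    show "(\<sigma> \<circ> flip K) a = prodperm \<pi> a"
      using pair[of k] unfolding a
      by (cases b; cases "k \<in> K"; simp add: flip_def prodperm_def \<pi>_def K_def; metis prod.collapse)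
  qed
  have fl: "permutation (flip K)" "sign (flip K) = (-1) ^ card K"
    using flip_sign[of K] by auto
  have ps: "permutation \<sigma>" using \<sigma> permutation_permutes finite by blast
  have "inj (prodperm \<pi>)"
    using comp fl(1) ps by (metis inj_compose permutation_bijective bij_is_inj)
  then have "inj \<pi>"
    by (auto simp: inj_def prodperm_def)
  then have "\<pi> permutes UNIV"
    by (meson bijI bij_imp_permutes finite_UNIV_inj_surj finite iso_tuple_UNIV_I)
  then have "sign (prodperm \<pi>) = 1" using prodperm_sign by blast
  then have "sign \<sigma> * (-1) ^ card K = 1"
    using comp fl ps by (metis sign_compose)
  then have "of_int (sign \<sigma>) * (-1::real) ^ card K = 1"
    by (metis of_int_1 of_int_mult of_int_minus of_int_power)
  then show ?thesis by (simp add: prodval)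
qed

lemma P0_std_pos: "P0 (omega_std x :: 'k::finite mat) > 0"
proof -
  let ?PU = "{\<sigma>. \<sigma> permutes (UNIV :: ('k \<times> bool) set)}"
  let ?t = "\<lambda>\<sigma>. of_int (sign \<sigma>) * (\<Prod>k\<in>UNIV. omega_std x $ \<sigma> (k, False) $ \<sigma> (k, True))"
  have "?t id = 1" by (simp add: sign_id S_entry)
  moreover have "?t id \<le> sum ?t ?PU"
    by (rule member_le_sum) (auto simp: permutes_id[unfolded id_def] std_term_nonneg)
  ultimately show ?thesis unfolding P0_def by simp
qed



lemma smooth_differentiable: "smooth f \<Longrightarrow> f differentiable (at x)"
  by (erule smooth.cases) (simp add: differentiable_on_def)

lemma deriv_matrix:
  fixes \<phi> :: "real ^ 'n::finite \<Rightarrow> real ^ 'n"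
  assumes "smooth \<phi>"
  shows "frechet_derivative \<phi> (at x) v = matrix (frechet_derivative \<phi> (at x)) *v v"
proof -
  have "(\<phi> has_derivative frechet_derivative \<phi> (at x)) (at x)"
    using smooth_differentiable[OF assms] frechet_derivative_works by blast
  then have "linear (frechet_derivative \<phi> (at x))" by (rule has_derivative_linear)
  then have "Vector_Spaces.linear (*s) (*s) (frechet_derivative \<phi> (at x))"
    by (simp add: linear_matrix_vector_mul_eq)
  then show ?thesis by (simp add: matrix_works)
qed

lemma dot_congr:
  fixes M A :: "real ^ 'n ^ 'n"
  shows "(M *v v) \<bullet> (A *v (M *v w)) = v \<bullet> ((transpose M ** A ** M) *v w)"
proof -
  have "v \<bullet> ((transpose M ** A ** M) *v w) = v \<bullet> (transpose M *v (A *v (M *v w)))"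
    by (simp add: matrix_vector_mul_assoc matrix_mul_assoc)
  also have "\<dots> = ((A *v (M *v w)) v* M) \<bullet> v"
    by (simp add: transpose_matrix_vector inner_commute)
  also have "\<dots> = (A *v (M *v w)) \<bullet> (M *v v)"
    by (simp add: dot_lmul_matrix)
  finally show ?thesis by (simp add: inner_commute)
qed

lemma mat_eq_form:
  fixes A B :: "real ^ 'n ^ 'n"
  assumes "\<And>v w. v \<bullet> (A *v w) = v \<bullet> (B *v w)"
  shows "A = B"
proof -
  have "A *v w = B *v w" for w using assms vector_eq_ldot by blast
  then show ?thesis by (simp add: matrix_eq)
qed

lemma pull_mat:
  fixes \<phi> :: "'k::finite pt \<Rightarrow> 'k pt"
  assumes "smooth \<phi>" and "pullback \<phi> (form_app C) = form_app E"
  shows "E x = transpose (matrix (frechet_derivative \<phi> (at x))) ** C (\<phi> x) ** matrix (frechet_derivative \<phi> (at x))"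
proof (rule mat_eq_form[symmetric])
  fix v w
  let ?M = "matrix (frechet_derivative \<phi> (at x))"
  have "pullback \<phi> (form_app C) x v w = form_app E x v w" using assms(2) by simp
  then have "(?M *v v) \<bullet> (C (\<phi> x) *v (?M *v w)) = v \<bullet> (E x *v w)"
    by (simp add: pullback_def form_app_def deriv_matrix[OF assms(1)])
  then show "v \<bullet> ((transpose ?M ** C (\<phi> x) ** ?M) *v w) = v \<bullet> (E x *v w)"
    by (simp add: dot_congr)
qed

lemma std_const: "omega_std x = omega_std y"
  by (simp add: omega_std_def)

lemma sum_S:
  "(\<Sum>b\<in>UNIV. omega_std x $ a $ b * X b) = (if snd a then -1 else 1) * X (fst a, \<not> snd a)"
proof -
  have "(\<Sum>b\<in>UNIV. omega_std x $ a $ b * X b) =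
      (\<Sum>b\<in>UNIV. if b = (fst a, \<not> snd a) then (if snd a then -1 else 1) * X b else 0)"
    by (rule sum.cong) (auto simp: S_entry)
  then show ?thesis by simp
qed

lemma std_sq: "omega_std x ** omega_std x = - mat 1"
proof -
  have "(omega_std x ** omega_std x) $ a $ c = (- mat 1 :: 'a::finite mat) $ a $ c" for a c
  proof -
    have "(omega_std x ** omega_std x) $ a $ c = (if snd a then -1 else 1) * omega_std x $ (fst a, \<not> snd a) $ c"
      unfolding matrix_matrix_mult_def vec_lambda_beta by (rule sum_S)
    also have "\<dots> = (- mat 1 :: 'a::finite mat) $ a $ c"
      by (simp add: S_entry mat_def)
    finally show ?thesis .
  qed
  then show ?thesis by (simp add: vec_eq_iff)
qed

lemma sum_pairs:
  fixes G :: "('k::finite \<times> bool) \<Rightarrow> real"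
  shows "(\<Sum>a\<in>UNIV. G a) = (\<Sum>k\<in>UNIV. G (k,False) + G (k,True))"
proof -
  have "(\<Sum>k\<in>UNIV. \<Sum>b\<in>UNIV. G (k,b)) = (\<Sum>(k,b)\<in>UNIV \<times> UNIV. G (k,b))"
    by (rule sum.cartesian_product)
  then have "(\<Sum>a\<in>UNIV. G a) = (\<Sum>k\<in>UNIV. \<Sum>b\<in>UNIV. G (k,b))"
    by (simp add: UNIV_Times_UNIV case_prod_beta')
  also have "\<dots> = (\<Sum>k\<in>UNIV. G (k,False) + G (k,True))"
    by (simp add: UNIV_bool add.commute)
  finally show ?thesis .
qed

lemma sumfun_trace:
  fixes A :: "'k::finite mat"
  assumes skew: "transpose A = - A"
  shows "sumfun A = -(1/2) * trace (omega_std x ** A)"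
proof -
  have sk: "A $ b $ a = - A $ a $ b" for a b
    using arg_cong[OF skew, of "\<lambda>M. M $ a $ b"] by (simp add: transpose_def)
  have "trace (omega_std x ** A) = (\<Sum>a\<in>UNIV. \<Sum>b\<in>UNIV. omega_std x $ a $ b * A $ b $ a)"
    by (simp add: trace_def matrix_matrix_mult_def)
  also have "\<dots> = (\<Sum>a\<in>UNIV. (if snd a then -1 else 1) * A $ (fst a, \<not> snd a) $ a)"
    by (simp only: sum_S)
  also have "\<dots> = (\<Sum>k\<in>UNIV. A $ (k, True) $ (k, False) - A $ (k, False) $ (k, True))"
    by (simp add: sum_pairs)
  also have "\<dots> = (\<Sum>k\<in>UNIV. -2 * A $ (k, False) $ (k, True))"
    by (rule sum.cong[OF refl]) (simp add: sk[of "(k, True)" "(k, False)" for k])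
  also have "\<dots> = -2 * sumfun A"
    by (simp add: sumfun_def sum_distrib_left)
  finally show ?thesis by simp
qed



lemma mneg1: "(- A) ** (B :: real ^'n ^'n) = - (A ** B)"
  by (simp add: matrix_matrix_mult_def vec_eq_iff sum_negf)
lemma mneg2: "A ** (- B :: real ^'n ^'n) = - (A ** B)"
  by (simp add: matrix_matrix_mult_def vec_eq_iff sum_negf)

lemma symp_dual:
  fixes M S :: "real ^'n ^'n"
  assumes SS: "S ** S = - mat 1" and es: "transpose M ** S ** M = S"
  shows "M ** S ** transpose M = S"
proof -
  define N where "N = - S"
  have SN: "S ** N = mat 1" and NS: "N ** S = mat 1"
    by (simp_all add: N_def mneg1 mneg2 SS)
  have "transpose M ** (S ** M ** N) = mat 1"
    using es SN by (simp add: matrix_mul_assoc)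
  then have "(S ** M ** N) ** transpose M = mat 1"
    by (simp add: matrix_left_right_inverse)
  then have "N ** ((S ** M ** N) ** transpose M) = N"
    by (simp add: matrix_mul_rid)
  then have "M ** N ** transpose M = N"
    using NS by (metis matrix_mul_assoc matrix_mul_lid)
  then show ?thesis
    by (simp add: N_def mneg1 mneg2)
qed

theorem theorem2p4:
  fixes \<Omega>1 \<Omega>2 :: "'k::finite pt \<Rightarrow> 'k mat"
  assumes "symplectic_form \<Omega>1" and "symplectic_form \<Omega>2"
    and "std_symplectomorphic \<Omega>1 \<Omega>2"
  shows "\<exists>\<phi>\<in>Symp_std. \<forall>x. pfaffian (\<Omega>1 (\<phi> x)) = pfaffian (\<Omega>2 x)
                            \<and> sumfun (\<Omega>1 (\<phi> x)) = sumfun (\<Omega>2 x)"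
proof -
  from assms(3) obtain \<phi> where \<phi>S: "\<phi> \<in> Symp_std"
    and pb: "pullback \<phi> (form_app \<Omega>1) = form_app \<Omega>2"
    unfolding std_symplectomorphic_def by blast
  from \<phi>S have sm: "smooth \<phi>" and pbs: "pullback \<phi> (form_app omega_std) = form_app omega_std"
    unfolding Symp_std_def diffeomorphism_def by auto
  have sk1: "transpose (\<Omega>1 y) = - \<Omega>1 y" for y
    using assms(1) by (simp add: symplectic_form_def skew_field_def)
  have sk2: "transpose (\<Omega>2 y) = - \<Omega>2 y" for y
    using assms(2) by (simp add: symplectic_form_def skew_field_def)
  show ?thesis
  proof (rule bexI[OF _ \<phi>S], intro allI conjI)
    fix x
    define M where "M = matrix (frechet_derivative \<phi> (at x))"
    define S where "S = (omega_std x :: 'k mat)"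
    have e2: "\<Omega>2 x = transpose M ** \<Omega>1 (\<phi> x) ** M"
      using pull_mat[OF sm pb] M_def by simp
    have es: "transpose M ** S ** M = S"
      using pull_mat[OF sm pbs, of x] std_const[of "\<phi> x" x] by (simp add: M_def S_def)
    have "P0 S = det M * P0 S" using P0_congr[of M S] es by simp
    moreover have "P0 S > 0" unfolding S_def by (rule P0_std_pos)
    ultimately have dM: "det M = 1" by simp
    show "pfaffian (\<Omega>1 (\<phi> x)) = pfaffian (\<Omega>2 x)"
      by (simp add: e2 pfaffian_P0 P0_congr dM)
    have SS: "S ** S = - mat 1" by (simp add: S_def std_sq)
    have dual: "M ** S ** transpose M = S" by (rule symp_dual[OF SS es])
    have "sumfun (\<Omega>2 x) = -(1/2) * trace (S ** (transpose M ** \<Omega>1 (\<phi> x) ** M))"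
      using sumfun_trace[OF sk2[of x], of x] e2 by (simp add: S_def)
    also have "trace (S ** (transpose M ** \<Omega>1 (\<phi> x) ** M)) = trace (M ** (S ** transpose M ** \<Omega>1 (\<phi> x)))"
      by (metis matrix_mul_assoc trace_mul_sym)
    also have "\<dots> = trace (S ** \<Omega>1 (\<phi> x))"
      using dual by (simp add: matrix_mul_assoc)
    also have "-(1/2) * trace (S ** \<Omega>1 (\<phi> x)) = sumfun (\<Omega>1 (\<phi> x))"
      using sumfun_trace[OF sk1[of "\<phi> x"], of x] by (simp add: S_def)
    finally show "sumfun (\<Omega>1 (\<phi> x)) = sumfun (\<Omega>2 x)" by simp
  qed
qed


end
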